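(* Let $A$ be a finite set of actions and let $\{\pi_\theta\}_{\theta\in\mathbb{R}^d}$ be a family of probability distributions on $A$ with $\pi_\theta(a)>0$ and $\theta\mapsto\pi_\theta(a)$ differentiable for every $a\in A$. Let $R:A\to\mathbb{R}$ be the reward function, let $A$ also denote the random action drawn from $\pi_\theta$, and write $R=R(A)$. Define $\eta_s(\theta):=\mathbb{E}_{a\sim\pi_\theta}[R(a)]$, $g_s(\theta):=\nabla_\theta\eta_s(\theta)$ and $S_\theta(a):=\nabla_\theta\log\pi_\theta(a)$, and assume $\|S_\theta(a)\|\le G_{\max}$ and $|R(a)|\le R_{\max}$ for all $a\in A$. Suppose the rewards take values in an interval $[R_{lo},R_{hi}]\subseteq[-R_{\max},R_{\max}]$ which is partitioned into $B$ consecutive non-overlapping intervals $B_1,\dots,B_B$, each of the form $B_k=[b_k,b_k+\Delta)$ of common length $\Delta>0$, with midpoints $m_k:=b_k+\Delta/2$, and let the discretized reward be $\tilde R:=k$ if and only if $R\in B_k$. Then $$\|g_s(\theta)\|\le \sqrt{2}\,G_{\max}R_{\max}\sqrt{I(A;\tilde R)}+G_{\max}\Delta .$$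
   Context: One-shot game (horizon one): the state is fixed, the agent draws $a\sim\pi_\theta$ and receives reward $R(a)$. $\|\cdot\|$ is the Euclidean norm; $I(A;\tilde R)$ is the mutual information (natural logarithm) between the action $A\sim\pi_\theta$ and the bin index $\tilde R$. *)

theory Defs
  imports "HOL-Analysis.Analysis"
begin

definition grad :: "('a::real_inner \<Rightarrow> real) \<Rightarrow> 'a \<Rightarrow> 'a" where
  "grad f x = (THE D. GDERIV f x :> D)"

text \<open>Bin k (k = 0,...,B-1): the half-open interval [lo + k*delta, lo + (k+1)*delta).\<close>
definition bin :: "real \<Rightarrow> real \<Rightarrow> nat \<Rightarrow> real set" where
  "bin lo delta k = {lo + real k * delta ..< lo + real k * delta + delta}"

definition mutual_info :: "'x set \<Rightarrow> 'y set \<Rightarrow> ('x \<Rightarrow> 'y \<Rightarrow> real) \<Rightarrow> real" where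
  "mutual_info X Y p =
     (\<Sum>x\<in>X. \<Sum>y\<in>Y. if p x y = 0 then 0
        else p x y * ln (p x y / ((\<Sum>y'\<in>Y. p x y') * (\<Sum>x'\<in>X. p x' y))))"

end

theory Submission
  imports Defs
begin

lemma grad_eq:
  fixes f :: "'a::real_inner \<Rightarrow> real"
  assumes "GDERIV f x :> D" shows "grad f x = D"
  unfolding grad_def
proof (rule the_equality)
  show "GDERIV f x :> D" by fact
  fix D' assume "GDERIV f x :> D'"
  then have "(\<lambda>h. h \<bullet> D') = (\<lambda>h. h \<bullet> D)" using assms unfolding gderiv_def
    by (rule has_derivative_unique)
  then have "(D'-D) \<bullet> D' = (D'-D) \<bullet> D" by metis
  then have "(D'-D) \<bullet> (D'-D) = 0" by (simp add: inner_diff_right)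
  thus "D' = D" by simp
qed

lemma diff_gderiv:
  fixes f :: "'a::euclidean_space \<Rightarrow> real"
  assumes "f differentiable (at x)" shows "\<exists>D. GDERIV f x :> D"
proof -
  obtain L where L: "(f has_derivative L) (at x)" using assms differentiable_def by blast
  then have lin: "linear L" using has_derivative_linear by blast
  have "L h = h \<bullet> (\<Sum>b\<in>Basis. L b *\<^sub>R b)" for h
  proof -
    have "L h = L (\<Sum>b\<in>Basis. (h \<bullet> b) *\<^sub>R b)" by (simp add: euclidean_representation)
    also have "\<dots> = (\<Sum>b\<in>Basis. (h \<bullet> b) * L b)"
      by (simp add: linear_sum[OF lin] linear_scale[OF lin])
    also have "\<dots> = h \<bullet> (\<Sum>b\<in>Basis. L b *\<^sub>R b)" by (simp add: inner_sum_right mult.commute)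
    finally show ?thesis .
  qed
  then have "L = (\<lambda>h. h \<bullet> (\<Sum>b\<in>Basis. L b *\<^sub>R b))" by blast
  thus ?thesis using L unfolding gderiv_def by metis
qed

lemma GDERIV_sum':
  assumes "\<forall>i\<in>I. GDERIV (f i) x :> D i"
  shows "GDERIV (\<lambda>x. \<Sum>i\<in>I. f i x) x :> (\<Sum>i\<in>I. D i)"
proof -
  have "((\<lambda>x. \<Sum>i\<in>I. f i x) has_derivative (\<lambda>h. \<Sum>i\<in>I. h \<bullet> D i)) (at x)"
    by (rule has_derivative_sum) (use assms in \<open>auto simp: gderiv_def\<close>)
  thus ?thesis by (simp add: gderiv_def inner_sum_right)
qed

lemma ln_lower:
  fixes x :: real assumes "x > 0"
  shows "(x-1)*(5*x+1)/(2*x*(x+2)) \<le> ln x"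
proof -
  define g where "g = (\<lambda>x::real. ln x - (x-1)*(5*x+1)/(2*x*(x+2)))"
  have d: "DERIV g y :> (y-1)^3/(y^2*(y+2)^2)" if "y>0" for y
  proof -
    have "DERIV g y :> (1/y - (((1*(5*y+1) + (y-1)*5)*(2*y*(y+2)) - (y-1)*(5*y+1)*(2*(y+2) + 2*y*1))/(2*y*(y+2))^2))"
      unfolding g_def using that
      by (auto intro!: derivative_eq_intros simp: power2_eq_square)
    moreover have "(1/y - (((1*(5*y+1) + (y-1)*5)*(2*y*(y+2)) - (y-1)*(5*y+1)*(2*(y+2) + 2*y*1))/(2*y*(y+2))^2))
       = (y-1)^3/(y^2*(y+2)^2)" using that
    proof -
      have "y + 2 > 0" using that by simp
      then show ?thesis using that
        by (simp add: divide_simps power2_eq_square power3_eq_cube) (simp add: algebra_simps)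
    qed
    ultimately show ?thesis by simp
  qed
  have g1: "g 1 = 0" by (simp add: g_def)
  have "g x \<ge> 0"
  proof (cases "x \<ge> 1")
    case True
    have "g 1 \<le> g x"
      apply (rule DERIV_nonneg_imp_nondecreasing[OF True])
      subgoal for y
        apply (rule exI[of _ "(y-1)^3/(y^2*(y+2)^2)"])
        using d[of y] by auto
      done
    thus ?thesis using g1 by simp
  next
    case False
    have "g x \<ge> g 1"
      apply (rule DERIV_nonpos_imp_nonincreasing[of x 1 g])
      using False apply simp
      subgoal for y
        apply (rule exI[of _ "(y-1)^3/(y^2*(y+2)^2)"])
        using d[of y] assms
        by (auto intro!: divide_nonpos_nonneg simp: power3_eq_cube)
           (metis mult_nonneg_nonpos zero_le_mult_iff zero_le_square diff_le_0_iff_le)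
      done
    thus ?thesis using g1 by simp
  qed
  thus ?thesis by (simp add: g_def)
qed

lemma pt_ineq:
  fixes p q :: real assumes "p \<ge> 0" "q > 0"
  shows "3*(p-q)^2 \<le> (2*p+4*q)*((if p=0 then 0 else p*ln(p/q)) - p + q)"
proof (cases "p = 0")
  case True thus ?thesis using assms by (simp add: power2_eq_square)
next
  case False
  then have p: "p > 0" using assms by simp
  have "(p/q-1)*(5*(p/q)+1)/(2*(p/q)*(p/q+2)) \<le> ln (p/q)"
    by (rule ln_lower) (use p assms in simp)
  moreover have "(p/q-1)*(5*(p/q)+1)/(2*(p/q)*(p/q+2)) = (p-q)*(5*p+q)/(2*p*(p+2*q))"
  proof -
    have "p + 2*q > 0" using p assms by simp
    then show ?thesis using p assms by (simp add: divide_simps)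
  qed
  ultimately have l: "(p-q)*(5*p+q)/(2*p*(p+2*q)) \<le> ln (p/q)" by simp
  have "p * ((p-q)*(5*p+q)/(2*p*(p+2*q))) \<le> p * ln (p/q)"
    by (intro mult_left_mono l) (use p in simp)
  moreover have "p * ((p-q)*(5*p+q)/(2*p*(p+2*q))) = (p-q)*(5*p+q)/(2*(p+2*q))"
    using p by simp
  ultimately have l2: "(p-q)*(5*p+q)/(2*(p+2*q)) \<le> p * ln (p/q)" by simp
  have "(2*p+4*q) * ((p-q)*(5*p+q)/(2*(p+2*q)) - p + q) \<le> (2*p+4*q)*(p*ln(p/q) - p + q)"
    using l2 p assms by (intro mult_left_mono) auto
  moreover have "(2*p+4*q) * ((p-q)*(5*p+q)/(2*(p+2*q)) - p + q) = 3*(p-q)^2"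
    using p assms by (simp add: field_simps power2_eq_square)
  ultimately show ?thesis using False by simp
qed

lemma pinsker:
  fixes p q :: "'i \<Rightarrow> real"
  assumes fin: "finite I" and p0: "\<forall>i\<in>I. p i \<ge> 0" and q0: "\<forall>i\<in>I. q i \<ge> 0"
    and qp: "\<forall>i\<in>I. q i = 0 \<longrightarrow> p i = 0" and sp: "sum p I = 1" and sq: "sum q I = 1"
  shows "(\<Sum>i\<in>I. \<bar>p i - q i\<bar>) \<le> sqrt 2 * sqrt (\<Sum>i\<in>I. if p i = 0 then 0 else p i * ln (p i / q i))"
proof -
  define L where "L i = (if p i = 0 then 0 else p i * ln (p i / q i))" for i
  define Dv where "Dv i = L i - p i + q i" for i
  define w where "w i = (2 * p i + 4 * q i) / 3" for i
  have pw: "\<bar>p i - q i\<bar> \<le> sqrt (w i) * sqrt (Dv i) \<and> Dv i \<ge> 0 \<and> w i \<ge> 0" if i: "i \<in> I" for i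
  proof (cases "q i = 0")
    case True
    then show ?thesis using qp i by (simp add: Dv_def L_def w_def)
  next
    case False
    then have qpos: "q i > 0" using q0 i by (simp add: less_le)
    have key: "3*(p i - q i)^2 \<le> (2*p i+4*q i) * Dv i"
      using pt_ineq[of "p i" "q i"] p0 qpos i by (simp add: Dv_def L_def)
    have wpos: "2*p i+4*q i > 0" using p0 qpos i by auto
    have Dnn: "Dv i \<ge> 0"
    proof (rule ccontr)
      assume "\<not> ?thesis"
      then have "(2*p i+4*q i) * Dv i < 0" using wpos by (simp add: mult_pos_neg)
      moreover have "3*(p i - q i)^2 \<ge> 0" by simp
      ultimately show False using key by linarith
    qed
    have "(p i - q i)^2 \<le> w i * Dv i" using key by (simp add: w_def)
    then have "sqrt ((p i - q i)^2) \<le> sqrt (w i * Dv i)" by (rule real_sqrt_le_mono)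
    moreover have "w i \<ge> 0" using wpos by (simp add: w_def)
    ultimately show ?thesis using Dnn by (simp only: real_sqrt_mult real_sqrt_abs)
  qed
  have "(\<Sum>i\<in>I. \<bar>p i - q i\<bar>) \<le> (\<Sum>i\<in>I. sqrt (w i) * sqrt (Dv i))"
    using pw by (intro sum_mono) auto
  also have "\<dots> \<le> sqrt ((\<Sum>i\<in>I. sqrt (w i) * sqrt (Dv i))^2)" by simp
  also have "\<dots> \<le> sqrt ((\<Sum>i\<in>I. (sqrt (w i))^2) * (\<Sum>i\<in>I. (sqrt (Dv i))^2))"
    by (rule real_sqrt_le_mono) (rule Cauchy_Schwarz_ineq_sum)
  also have "(\<Sum>i\<in>I. (sqrt (w i))^2) = (\<Sum>i\<in>I. w i)" using pw by (intro sum.cong) auto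
  also have "(\<Sum>i\<in>I. (sqrt (Dv i))^2) = (\<Sum>i\<in>I. Dv i)" using pw by (intro sum.cong) auto
  also have "(\<Sum>i\<in>I. w i) = 2" using sp sq
    by (simp add: w_def sum_divide_distrib[symmetric] sum.distrib sum_distrib_left[symmetric])
  also have "(\<Sum>i\<in>I. Dv i) = (\<Sum>i\<in>I. L i)" using sp sq
    by (simp add: Dv_def sum.distrib sum_subtractf)
  finally show ?thesis by (simp add: L_def real_sqrt_mult)
qed

lemma bin_le:
  fixes lo r \<Delta> :: real and k j :: nat
  assumes "\<Delta> > 0" "lo + real k * \<Delta> \<le> r" "r < lo + real j * \<Delta> + \<Delta>"
  shows "k \<le> j"
proof -
  have "real k * \<Delta> < real (j+1) * \<Delta>" using assms by (simp add: algebra_simps)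
  then have "real k < real (j+1)" using assms(1) by (simp add: mult_less_cancel_right_pos)
  then show ?thesis by simp
qed

theorem theorem2:
  fixes A :: "'a set"
    and \<pi> :: "real^'d \<Rightarrow> 'a \<Rightarrow> real"
    and R :: "'a \<Rightarrow> real"
    and \<theta> :: "real^'d"
    and Gmax Rmax Rlo Rhi \<Delta> :: real
    and B :: nat
  assumes finA: "finite A"
    and pos: "\<forall>t. \<forall>a\<in>A. \<pi> t a > 0"
    and distr: "\<forall>t. (\<Sum>a\<in>A. \<pi> t a) = 1"
    and diff: "\<forall>t. \<forall>a\<in>A. (\<lambda>s. \<pi> s a) differentiable (at t)"
    and score_bd: "\<forall>t. \<forall>a\<in>A. norm (grad (\<lambda>s. ln (\<pi> s a)) t) \<le> Gmax"
    and rew_bd: "\<forall>a\<in>A. \<bar>R a\<bar> \<le> Rmax"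
    and rew_range: "\<forall>a\<in>A. Rlo \<le> R a \<and> R a \<le> Rhi"
    and interval: "-Rmax \<le> Rlo" "Rlo \<le> Rhi" "Rhi \<le> Rmax"
    and delta_pos: "\<Delta> > 0"
    and B_pos: "B \<ge> 1"
    and partition: "Rhi = Rlo + real B * \<Delta>"
    and binned: "\<forall>a\<in>A. \<exists>k<B. R a \<in> bin Rlo \<Delta> k"
  shows "norm (grad (\<lambda>t. \<Sum>a\<in>A. \<pi> t a * R a) \<theta>)
           \<le> sqrt 2 * Gmax * Rmax *
               sqrt (mutual_info A {..<B}
                       (\<lambda>a k. \<pi> \<theta> a * (if R a \<in> bin Rlo \<Delta> k then 1 else 0)))
             + Gmax * \<Delta>"
proof -
  have Rmax0: "Rmax \<ge> 0" using interval by linarith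
  have "\<forall>a\<in>A. \<exists>D. GDERIV (\<lambda>s. \<pi> s a) \<theta> :> D" using diff diff_gderiv by blast
  then obtain D where D: "\<forall>a\<in>A. GDERIV (\<lambda>s. \<pi> s a) \<theta> :> D a" by metis
  define S where "S a = (1 / \<pi> \<theta> a) *\<^sub>R D a" for a
  have DS: "D a = \<pi> \<theta> a *\<^sub>R S a" if "a \<in> A" for a
  proof -
    have "\<pi> \<theta> a > 0" using pos that by blast
    then show ?thesis by (simp add: S_def)
  qed
  have Sb: "norm (S a) \<le> Gmax" if a: "a \<in> A" for a
  proof -
    have "GDERIV (\<lambda>s. ln (\<pi> s a)) \<theta> :> (1 / \<pi> \<theta> a) *\<^sub>R D a"
      by (rule GDERIV_DERIV_compose[OF D[rule_format, OF a]])
         (rule DERIV_ln_divide, use pos a in auto)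
    then have "grad (\<lambda>s. ln (\<pi> s a)) \<theta> = S a" unfolding S_def by (rule grad_eq)
    then show ?thesis using score_bd a by metis
  qed
  have Ane: "A \<noteq> {}" using distr by auto
  then obtain a0 where "a0 \<in> A" by blast
  then have Gmax0: "Gmax \<ge> 0" using Sb[of a0] norm_ge_zero[of "S a0"] by linarith
  have sumD: "(\<Sum>a\<in>A. D a) = 0"
  proof -
    have "GDERIV (\<lambda>t. \<Sum>a\<in>A. \<pi> t a) \<theta> :> (\<Sum>a\<in>A. D a)"
      by (rule GDERIV_sum') (use D in auto)
    moreover have "(\<lambda>t. \<Sum>a\<in>A. \<pi> t a) = (\<lambda>t. 1)" using distr by auto
    ultimately have "GDERIV (\<lambda>t. 1) \<theta> :> (\<Sum>a\<in>A. D a)" by simp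
    then have "grad (\<lambda>t. 1::real) \<theta> = (\<Sum>a\<in>A. D a)" by (rule grad_eq)
    moreover have "grad (\<lambda>t. 1::real) \<theta> = 0" by (rule grad_eq) (rule GDERIV_const)
    ultimately show ?thesis by simp
  qed
  have sumS: "(\<Sum>a\<in>A. \<pi> \<theta> a *\<^sub>R S a) = 0" using sumD DS by (metis (no_types, lifting) sum.cong)
  have gradg: "grad (\<lambda>t. \<Sum>a\<in>A. \<pi> t a * R a) \<theta> = (\<Sum>a\<in>A. R a *\<^sub>R D a)"
  proof (rule grad_eq, rule GDERIV_sum', intro ballI)
    fix a assume a: "a \<in> A"
    show "GDERIV (\<lambda>t. \<pi> t a * R a) \<theta> :> R a *\<^sub>R D a"
      using GDERIV_mult[OF D[rule_format, OF a] GDERIV_const[of "R a"]] by simp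
  qed
  obtain kk where kk: "\<forall>a\<in>A. kk a < B \<and> R a \<in> bin Rlo \<Delta> (kk a)" using binned by metis
  have uniq: "k = kk a" if a: "a \<in> A" and k: "R a \<in> bin Rlo \<Delta> k" for a k
  proof -
    have m: "R a \<in> bin Rlo \<Delta> (kk a)" using kk a by blast
    have "k \<le> kk a" using k m delta_pos by (intro bin_le[of \<Delta> Rlo k "R a"]) (auto simp: bin_def)
    moreover have "kk a \<le> k" using k m delta_pos by (intro bin_le[of \<Delta> Rlo "kk a" "R a"]) (auto simp: bin_def)
    ultimately show ?thesis by simp
  qed
  define p where "p a k = \<pi> \<theta> a * (if R a \<in> bin Rlo \<Delta> k then 1 else 0)" for a k
  have p_eq: "p a k = (if k = kk a then \<pi> \<theta> a else 0)" if "a \<in> A" for a k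
    using uniq[OF that] kk that by (auto simp: p_def)
  define P where "P k = (\<Sum>a\<in>A. p a k)" for k
  define q where "q a k = \<pi> \<theta> a * P k" for a k
  have marg: "(\<Sum>k<B. p a k) = \<pi> \<theta> a" if a: "a \<in> A" for a
  proof -
    have "(\<Sum>k<B. p a k) = (\<Sum>k<B. if k = kk a then \<pi> \<theta> a else 0)"
      using p_eq[OF a] by simp
    also have "\<dots> = \<pi> \<theta> a" using kk a by (simp add: sum.delta')
    finally show ?thesis .
  qed
  have p0: "p a k \<ge> 0" if "a \<in> A" for a k
    using pos that by (simp add: p_def less_imp_le)
  have P0: "P k \<ge> 0" for k using p0 by (simp add: P_def sum_nonneg)
  have MI: "mutual_info A {..<B} (\<lambda>a k. \<pi> \<theta> a * (if R a \<in> bin Rlo \<Delta> k then 1 else 0))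
      = (\<Sum>(a,k)\<in>A \<times> {..<B}. if p a k = 0 then 0 else p a k * ln (p a k / q a k))"
  proof -
    have e: "(\<lambda>a k. \<pi> \<theta> a * (if R a \<in> bin Rlo \<Delta> k then 1 else 0)) = p"
      by (simp add: p_def fun_eq_iff)
    have "mutual_info A {..<B} p = (\<Sum>a\<in>A. \<Sum>k<B. if p a k = 0 then 0 else p a k * ln (p a k / q a k))"
      unfolding mutual_info_def
      by (intro sum.cong refl) (simp add: marg q_def P_def)
    also have "\<dots> = (\<Sum>(a,k)\<in>A \<times> {..<B}. if p a k = 0 then 0 else p a k * ln (p a k / q a k))"
      by (rule sum.cartesian_product)
    finally show ?thesis using e by simp
  qed
  have sp: "(\<Sum>(a,k)\<in>A \<times> {..<B}. p a k) = 1"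
  proof -
    have "(\<Sum>(a,k)\<in>A \<times> {..<B}. p a k) = (\<Sum>a\<in>A. \<Sum>k<B. p a k)"
      by (rule sum.cartesian_product[symmetric])
    also have "\<dots> = (\<Sum>a\<in>A. \<pi> \<theta> a)" using marg by simp
    finally show ?thesis using distr by simp
  qed
  have sq: "(\<Sum>(a,k)\<in>A \<times> {..<B}. q a k) = 1"
  proof -
    have "(\<Sum>(a,k)\<in>A \<times> {..<B}. q a k) = (\<Sum>a\<in>A. \<Sum>k<B. q a k)"
      by (rule sum.cartesian_product[symmetric])
    also have "\<dots> = (\<Sum>a\<in>A. \<pi> \<theta> a) * (\<Sum>k<B. P k)"
      by (simp add: q_def sum_product)
    also have "(\<Sum>k<B. P k) = (\<Sum>a\<in>A. \<Sum>k<B. p a k)"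
      unfolding P_def by (rule sum.swap)
    also have "\<dots> = (\<Sum>a\<in>A. \<pi> \<theta> a)" using marg by simp
    finally show ?thesis using distr by simp
  qed
  have qp: "p a k = 0" if a: "a \<in> A" and q: "q a k = 0" for a k
  proof -
    have "\<pi> \<theta> a > 0" using pos a by blast
    then have "P k = 0" using q by (simp add: q_def)
    then show "p a k = 0" using finA p0 a by (simp add: P_def sum_nonneg_eq_0_iff)
  qed
  have TV: "(\<Sum>(a,k)\<in>A \<times> {..<B}. \<bar>p a k - q a k\<bar>)
      \<le> sqrt 2 * sqrt (\<Sum>(a,k)\<in>A \<times> {..<B}. if p a k = 0 then 0 else p a k * ln (p a k / q a k))"
    unfolding split_def
  proof (rule pinsker)
    show "finite (A \<times> {..<B})" using finA by simp
    show "\<forall>i\<in>A \<times> {..<B}. 0 \<le> p (fst i) (snd i)" using p0 by auto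
    show "\<forall>i\<in>A \<times> {..<B}. 0 \<le> q (fst i) (snd i)" using P0 pos by (auto simp: q_def less_imp_le)
    show "\<forall>i\<in>A \<times> {..<B}. q (fst i) (snd i) = 0 \<longrightarrow> p (fst i) (snd i) = 0" using qp by auto
    show "(\<Sum>i\<in>A \<times> {..<B}. p (fst i) (snd i)) = 1" using sp by (simp add: split_def)
    show "(\<Sum>i\<in>A \<times> {..<B}. q (fst i) (snd i)) = 1" using sq by (simp add: split_def)
  qed
  define f where "f k = Rlo + real k * \<Delta>" for k
  have fb: "\<bar>f k\<bar> \<le> Rmax" if "k < B" for k
  proof -
    have "real k + 1 \<le> real B" using that by simp
    then have "(real k + 1) * \<Delta> \<le> real B * \<Delta>" using delta_pos by (intro mult_right_mono) auto
    then have h1: "real k * \<Delta> + \<Delta> \<le> real B * \<Delta>" by (simp add: algebra_simps)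
    have h2: "real k * \<Delta> \<ge> 0" using delta_pos by simp
    show ?thesis using interval partition delta_pos h1 h2
      unfolding f_def abs_le_iff by linarith
  qed
  have Rf: "\<bar>R a - f (kk a)\<bar> \<le> \<Delta>" if "a \<in> A" for a
    using kk that by (auto simp: bin_def f_def abs_le_iff)
  have nD: "norm (D a) \<le> \<pi> \<theta> a * Gmax" if a: "a \<in> A" for a
  proof -
    have "\<pi> \<theta> a > 0" using pos a by blast
    then show ?thesis using DS[OF a] Sb[OF a] by (simp add: mult_left_mono)
  qed
  have split: "(\<Sum>a\<in>A. R a *\<^sub>R D a) = (\<Sum>a\<in>A. (R a - f (kk a)) *\<^sub>R D a) + (\<Sum>a\<in>A. f (kk a) *\<^sub>R D a)"
    by (simp add: sum.distrib[symmetric] scaleR_left_diff_distrib)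
  have T1: "norm (\<Sum>a\<in>A. (R a - f (kk a)) *\<^sub>R D a) \<le> Gmax * \<Delta>"
  proof -
    have "norm (\<Sum>a\<in>A. (R a - f (kk a)) *\<^sub>R D a) \<le> (\<Sum>a\<in>A. norm ((R a - f (kk a)) *\<^sub>R D a))"
      by (rule norm_sum)
    also have "\<dots> \<le> (\<Sum>a\<in>A. \<Delta> * (\<pi> \<theta> a * Gmax))"
      using Rf nD delta_pos by (intro sum_mono) (auto intro: mult_mono)
    also have "\<dots> = \<Delta> * Gmax * (\<Sum>a\<in>A. \<pi> \<theta> a)"
      by (simp add: sum_distrib_left mult_ac)
    finally show ?thesis using distr by (simp add: mult_ac)
  qed
  have T2eq: "(\<Sum>a\<in>A. f (kk a) *\<^sub>R D a) = (\<Sum>a\<in>A. \<Sum>k<B. ((p a k - q a k) * f k) *\<^sub>R S a)"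
  proof -
    have e1: "(\<Sum>k<B. (p a k * f k) *\<^sub>R S a) = f (kk a) *\<^sub>R D a" if a: "a \<in> A" for a
    proof -
      have "(\<Sum>k<B. (p a k * f k) *\<^sub>R S a) = (\<Sum>k<B. if k = kk a then (\<pi> \<theta> a * f k) *\<^sub>R S a else 0)"
        using p_eq[OF a] by (intro sum.cong) auto
      also have "\<dots> = (\<pi> \<theta> a * f (kk a)) *\<^sub>R S a" using kk a by (simp add: sum.delta')
      finally show ?thesis using DS[OF a] by (simp add: mult.commute)
    qed
    have e2: "(\<Sum>a\<in>A. \<Sum>k<B. (q a k * f k) *\<^sub>R S a) = (\<Sum>k<B. (P k * f k) *\<^sub>R (\<Sum>a\<in>A. \<pi> \<theta> a *\<^sub>R S a))"
      by (subst sum.swap) (simp add: q_def scaleR_sum_right mult_ac)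
    have "(\<Sum>a\<in>A. \<Sum>k<B. ((p a k - q a k) * f k) *\<^sub>R S a)
        = (\<Sum>a\<in>A. \<Sum>k<B. (p a k * f k) *\<^sub>R S a) - (\<Sum>a\<in>A. \<Sum>k<B. (q a k * f k) *\<^sub>R S a)"
      by (simp add: sum_subtractf[symmetric] left_diff_distrib scaleR_left_diff_distrib)
    also have "\<dots> = (\<Sum>a\<in>A. f (kk a) *\<^sub>R D a)"
      using e1 e2 sumS by simp
    finally show ?thesis by simp
  qed
  have T2: "norm (\<Sum>a\<in>A. \<Sum>k<B. ((p a k - q a k) * f k) *\<^sub>R S a)
      \<le> Gmax * Rmax * (\<Sum>(a,k)\<in>A \<times> {..<B}. \<bar>p a k - q a k\<bar>)"
  proof -
    have "norm (\<Sum>a\<in>A. \<Sum>k<B. ((p a k - q a k) * f k) *\<^sub>R S a)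
        \<le> (\<Sum>a\<in>A. norm (\<Sum>k<B. ((p a k - q a k) * f k) *\<^sub>R S a))" by (rule norm_sum)
    also have "\<dots> \<le> (\<Sum>a\<in>A. \<Sum>k<B. norm (((p a k - q a k) * f k) *\<^sub>R S a))"
      by (intro sum_mono norm_sum)
    also have "\<dots> \<le> (\<Sum>a\<in>A. \<Sum>k<B. \<bar>p a k - q a k\<bar> * (Rmax * Gmax))"
    proof (intro sum_mono)
      fix a k assume a: "a \<in> A" and k: "k \<in> {..<B}"
      have "\<bar>f k\<bar> * norm (S a) \<le> Rmax * Gmax"
        using fb[of k] k Sb[OF a] Rmax0 by (auto intro: mult_mono)
      then have "\<bar>p a k - q a k\<bar> * (\<bar>f k\<bar> * norm (S a)) \<le> \<bar>p a k - q a k\<bar> * (Rmax * Gmax)"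
        by (intro mult_left_mono) auto
      then show "norm (((p a k - q a k) * f k) *\<^sub>R S a) \<le> \<bar>p a k - q a k\<bar> * (Rmax * Gmax)"
        by (simp add: abs_mult mult_ac)
    qed
    also have "\<dots> = Gmax * Rmax * (\<Sum>a\<in>A. \<Sum>k<B. \<bar>p a k - q a k\<bar>)"
      by (simp add: sum_distrib_left sum_distrib_right mult_ac)
    also have "(\<Sum>a\<in>A. \<Sum>k<B. \<bar>p a k - q a k\<bar>) = (\<Sum>(a,k)\<in>A \<times> {..<B}. \<bar>p a k - q a k\<bar>)"
      by (rule sum.cartesian_product)
    finally show ?thesis .
  qed
  have GR: "Gmax * Rmax \<ge> 0" using Gmax0 Rmax0 by simp
  have "norm (grad (\<lambda>t. \<Sum>a\<in>A. \<pi> t a * R a) \<theta>)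
      \<le> norm (\<Sum>a\<in>A. (R a - f (kk a)) *\<^sub>R D a) + norm (\<Sum>a\<in>A. f (kk a) *\<^sub>R D a)"
    unfolding gradg split by (rule norm_triangle_ineq)
  also have "\<dots> \<le> Gmax * \<Delta> + Gmax * Rmax * (sqrt 2 * sqrt (mutual_info A {..<B}
                       (\<lambda>a k. \<pi> \<theta> a * (if R a \<in> bin Rlo \<Delta> k then 1 else 0))))"
  proof (rule add_mono[OF T1])
    show "norm (\<Sum>a\<in>A. f (kk a) *\<^sub>R D a) \<le> Gmax * Rmax * (sqrt 2 * sqrt (mutual_info A {..<B}
                       (\<lambda>a k. \<pi> \<theta> a * (if R a \<in> bin Rlo \<Delta> k then 1 else 0))))"
      unfolding T2eq MI using T2 mult_left_mono[OF TV GR] by linarith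
  qed
  finally show ?thesis by (simp add: mult_ac)
qed

end
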